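(* Consider selective layer fine-tuning in federated learning with one local step per epoch ($\tau=1$), run for $T$ epochs with learning rate $\eta>0$ from $\theta^0$. Assume: (i) ($\gamma$-smoothness) there is $\gamma>0$ with $\|\nabla f_i(\theta)-\nabla f_i(\theta')\|_2\le\gamma\|\theta-\theta'\|_2$ for all $\theta,\theta'$ and all $i\in\mathcal{N}$; (ii) (unbiased, bounded-variance stochastic gradients) for all $i$, $l$, $\theta$ and random mini-batches $\xi$, $\mathbb{E}[g_{i,l}(\theta;\xi)]=\nabla_l f_i(\theta)$, and there are $\sigma_l>0$ with $\|g_{i,l}(\theta;\xi)-\nabla_l f_i(\theta)\|^2\le\sigma_l^2$ for all $i$, and $\sum_{l\in\mathcal{L}_t}\sigma_l^2\le\sigma^2$ for all $t$; (iii) (gradient diversity) there are $\kappa_l>0$ with $\|\nabla_l f(\theta)-\nabla_l f_i(\theta)\|^2\le\kappa_l^2$ for all $i\in\mathcal{N}$, $l\in\mathcal{L}$ and all $\theta$. Let $C:=1-4\eta\gamma>0$. Then $$\min_{t\in[T]}\mathbb{E}\big[\|\nabla f(\theta^t)\|_2^2\big]\le\frac{2}{\eta CT}\big[f(\theta^0)-f(\theta^* )\big]+\frac{2\gamma\eta}{C}\sigma^2+\frac{1}{T}\sum_{t=1}^T\Big(\frac{1}{\gamma\eta C}+2\Big)\big(\mathcal{E}_{t,1}+\mathcal{E}_{t,2}\big),$$ where $\mathcal{E}_{t,1}=\mathbb{E}\big[\|\sum_{l\notin\mathcal{L}_t}\nabla_l f(\theta^t)\|^2\big]$ and $\mathcal{E}_{t,2}=\sum_{l\in\mathcal{L}_t}\chi_{\mathbf{w}_{t,l}\|\alpha}\kappa_l^2$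 with $\chi_{\mathbf{w}_{t,l}\|\alpha}=\sum_{i\in\mathcal{N}}\frac{(w_{i,l}^t-\alpha_i)^2}{\alpha_i}$.
   Context: There are $N$ clients $\mathcal{N}=\{1,\dots,N\}$; client $i$ has dataset $\mathcal{D}_i$ with $d_i>0$ samples, loss $F_i(\theta;\xi)$, local objective $f_i(\theta)=\frac1{d_i}\sum_{\xi\in\mathcal{D}_i}F_i(\theta;\xi)$; $\alpha_i=d_i/\sum_j d_j$ and the global objective is $f=\sum_i\alpha_i f_i$, which has a global minimizer $\theta^*$. The model $\theta\in\mathbb{R}^P$ is partitioned into $L$ layers indexed by $\mathcal{L}=\{1,\dots,L\}$; $\nabla_l F(\theta)$ denotes the gradient with respect to layer $l$'s parameters, viewed in $\mathbb{R}^P$ with zeros outside that block; $g_{i,l}(\theta;\xi)=\nabla_l F_i(\theta;\xi)$ is the stochastic layer gradient on mini-batch $\xi$. In each epoch $t$, a set $\mathcal{S}^t\subseteq\mathcal{N}$ of clients participates, each $i\in\mathcal{S}^t$ has a selected layer set $\mathcal{L}_i^t\subseteq\mathcal{L}$ (arbitrary, may vary with $i$ and $t$), and $\mathcal{L}_t=\bigcup_{i\in\mathcal{S}^t}\mathcal{L}_i^t$. Weights: $w_{i,l}^t=d_i/\sum_{j\in\mathcal{S}^t:\,l\in\mathcal{L}_j^t}d_j$ if $i\in\mathcal{S}^t$ and $l\in\mathcal{L}_i^t$, and $w_{i,l}^t=0$ otherwise (for every $i\in\mathcal{N}$). Update with $\tau=1$: each $i\in\mathcal{S}^t$ samples an independent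 mini-batch $\xi_i^t$, and $\theta^{t+1}=\theta^t-\eta\sum_{l\in\mathcal{L}_t}\sum_{i\in\mathcal{S}^t}w_{i,l}^t g_{i,l}(\theta^t;\xi_i^t)$. Expectations are over mini-batch sampling. *)

theory Defs
  imports "HOL-Probability.Probability"
begin

definition grad :: "('a::real_inner \<Rightarrow> real) \<Rightarrow> 'a \<Rightarrow> 'a" where
  "grad f x = (THE D. GDERIV f x :> D)"

definition lblock :: "('p \<Rightarrow> nat) \<Rightarrow> nat \<Rightarrow> real^'p \<Rightarrow> real^'p" where
  "lblock layer l v = (\<chi> j. if layer j = l then v $ j else 0)"

definition fobj :: "(nat \<Rightarrow> 'b \<Rightarrow> real^'p \<Rightarrow> real) \<Rightarrow> (nat \<Rightarrow> 'b set) \<Rightarrow> nat \<Rightarrow> real^'p \<Rightarrow> real" where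
  "fobj F D i \<theta> = (1 / real (card (D i))) * (\<Sum>\<xi>\<in>D i. F i \<xi> \<theta>)"

definition alpha :: "nat \<Rightarrow> (nat \<Rightarrow> 'b set) \<Rightarrow> nat \<Rightarrow> real" where
  "alpha N D i = real (card (D i)) / (\<Sum>j\<in>{1..N}. real (card (D j)))"

definition fglob :: "nat \<Rightarrow> (nat \<Rightarrow> 'b \<Rightarrow> real^'p \<Rightarrow> real) \<Rightarrow> (nat \<Rightarrow> 'b set) \<Rightarrow> real^'p \<Rightarrow> real" where
  "fglob N F D \<theta> = (\<Sum>i\<in>{1..N}. alpha N D i * fobj F D i \<theta>)"

definition sgrad :: "('p \<Rightarrow> nat) \<Rightarrow> (nat \<Rightarrow> 'b \<Rightarrow> real^'p \<Rightarrow> real) \<Rightarrow> nat \<Rightarrow> nat \<Rightarrow> real^'p \<Rightarrow> 'b \<Rightarrow> real^'p" where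
  "sgrad layer F i l \<theta> \<xi> = lblock layer l (grad (F i \<xi>) \<theta>)"

definition Lsel :: "(nat \<Rightarrow> nat set) \<Rightarrow> (nat \<Rightarrow> nat \<Rightarrow> nat set) \<Rightarrow> nat \<Rightarrow> nat set" where
  "Lsel S Ls t = (\<Union>i\<in>S t. Ls t i)"

definition wgt :: "(nat \<Rightarrow> 'b set) \<Rightarrow> (nat \<Rightarrow> nat set) \<Rightarrow> (nat \<Rightarrow> nat \<Rightarrow> nat set) \<Rightarrow> nat \<Rightarrow> nat \<Rightarrow> nat \<Rightarrow> real" where
  "wgt D S Ls t i l = (if i \<in> S t \<and> l \<in> Ls t i
      then real (card (D i)) / (\<Sum>j\<in>{j\<in>S t. l \<in> Ls t j}. real (card (D j)))
      else 0)"

definition chi2 :: "nat \<Rightarrow> (nat \<Rightarrow> 'b set) \<Rightarrow> (nat \<Rightarrow> nat set) \<Rightarrow> (nat \<Rightarrow> nat \<Rightarrow> nat set) \<Rightarrow> nat \<Rightarrow> nat \<Rightarrow> real" where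
  "chi2 N D S Ls t l = (\<Sum>i\<in>{1..N}. (wgt D S Ls t i l - alpha N D i)\<^sup>2 / alpha N D i)"

primrec traj :: "nat \<Rightarrow> ('p \<Rightarrow> nat) \<Rightarrow> (nat \<Rightarrow> 'b \<Rightarrow> real^'p \<Rightarrow> real) \<Rightarrow> (nat \<Rightarrow> 'b set)
    \<Rightarrow> (nat \<Rightarrow> nat set) \<Rightarrow> (nat \<Rightarrow> nat \<Rightarrow> nat set) \<Rightarrow> (nat \<Rightarrow> 'b pmf) \<Rightarrow> real \<Rightarrow> real^'p
    \<Rightarrow> nat \<Rightarrow> (real^'p) pmf" where
  "traj N layer F D S Ls Q \<eta> \<theta>0 0 = return_pmf \<theta>0"
| "traj N layer F D S Ls Q \<eta> \<theta>0 (Suc t) =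
     bind_pmf (traj N layer F D S Ls Q \<eta> \<theta>0 t) (\<lambda>\<theta>.
       map_pmf (\<lambda>\<xi>. \<theta> - \<eta> *\<^sub>R (\<Sum>l\<in>Lsel S Ls t. \<Sum>i\<in>S t.
                         wgt D S Ls t i l *\<^sub>R sgrad layer F i l \<theta> (\<xi> i)))
         (Pi_pmf (S t) undefined Q))"

end

theory Submission
  imports Defs
begin


lemma grad_eq:
  fixes f :: "'a::euclidean_space \<Rightarrow> real"
  assumes "GDERIV f x :> D" shows "grad f x = D"
proof -
  have u: "D' = D" if "GDERIV f x :> D'" for D'
  proof -
    have "(\<lambda>h. h \<bullet> D') = (\<lambda>h. h \<bullet> D)"
      using has_derivative_unique that assms unfolding gderiv_def by blast
    then have "(D - D') \<bullet> D' = (D - D') \<bullet> D" by meson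
    then have "(D - D') \<bullet> (D - D') = 0" by (simp add: inner_diff_right)
    then show ?thesis by simp
  qed
  show ?thesis unfolding grad_def using assms u by (rule the_equality)
qed

lemma grad_has:
  fixes f :: "'a::euclidean_space \<Rightarrow> real"
  assumes "f differentiable (at x)" shows "GDERIV f x :> grad f x"
proof -
  obtain f' where f': "(f has_derivative f') (at x)" using assms unfolding differentiable_def by blast
  have lin: "linear f'" using f' has_derivative_linear by blast
  define D where "D = (\<Sum>i\<in>Basis. f' i *\<^sub>R i)"
  have "f' h = h \<bullet> D" for h
    using Linear_Algebra.linear_componentwise[OF lin, of h 1] by (simp add: D_def inner_sum_right mult.commute)
  then have "f' = (\<lambda>h. h \<bullet> D)" by auto
  then have "GDERIV f x :> D" using f' unfolding gderiv_def by simp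
  then show ?thesis using grad_eq by metis
qed



lemma lblock_add: "lblock layer l (a + b) = lblock layer l a + lblock layer l b"
  by (simp add: lblock_def vec_eq_iff)
lemma lblock_diff: "lblock layer l (a - b) = lblock layer l a - lblock layer l b"
  by (simp add: lblock_def vec_eq_iff)
lemma lblock_scaleR: "lblock layer l (c *\<^sub>R a) = c *\<^sub>R lblock layer l a"
  by (simp add: lblock_def vec_eq_iff)
lemma lblock_sum: "lblock layer l (\<Sum>i\<in>I. x i) = (\<Sum>i\<in>I. lblock layer l (x i))"
  by (simp add: lblock_def vec_eq_iff sum_component)

lemma lblock_inner_diff: "l \<noteq> l' \<Longrightarrow> lblock layer l a \<bullet> lblock layer l' b = 0"
  by (simp add: lblock_def inner_vec_def, intro sum.neutral) auto

lemma lblock_sum_layers: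
  assumes "finite U" "\<forall>j. layer j \<in> U"
  shows "(\<Sum>l\<in>U. lblock layer l v) = v"
proof -
  have "(\<Sum>l\<in>U. lblock layer l v) $ j = v $ j" for j
    using assms by (simp add: lblock_def sum_component)
  then show ?thesis by (simp add: vec_eq_iff)
qed

lemma norm_lblock_le: "norm (lblock layer l v) \<le> norm v"
  unfolding norm_le by (auto simp: lblock_def inner_vec_def intro!: sum_mono)

lemma lblock_pyth:
  assumes "finite U"
  shows "(norm (\<Sum>l\<in>U. lblock layer l (y l)))\<^sup>2 = (\<Sum>l\<in>U. (norm (lblock layer l (y l)))\<^sup>2)"
proof -
  have "(norm (\<Sum>l\<in>U. lblock layer l (y l)))\<^sup>2
      = (\<Sum>l\<in>U. \<Sum>l'\<in>U. lblock layer l (y l) \<bullet> lblock layer l' (y l'))"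
    by (simp add: power2_norm_eq_inner inner_sum_left inner_sum_right, subst sum.swap, simp)
  also have "\<dots> = (\<Sum>l\<in>U. lblock layer l (y l) \<bullet> lblock layer l (y l))"
  proof (rule sum.cong[OF refl])
    fix l assume l: "l \<in> U"
    have "(\<Sum>l'\<in>U. lblock layer l (y l) \<bullet> lblock layer l' (y l'))
        = lblock layer l (y l) \<bullet> lblock layer l (y l) + (\<Sum>l'\<in>U - {l}. lblock layer l (y l) \<bullet> lblock layer l' (y l'))"
      using l assms by (simp add: sum.remove)
    also have "(\<Sum>l'\<in>U - {l}. lblock layer l (y l) \<bullet> lblock layer l' (y l')) = 0"
      by (intro sum.neutral) (auto intro: lblock_inner_diff)
    finally show "(\<Sum>l'\<in>U. lblock layer l (y l) \<bullet> lblock layer l' (y l'))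
        = lblock layer l (y l) \<bullet> lblock layer l (y l)" by simp
  qed
  finally show ?thesis by (simp add: power2_norm_eq_inner)
qed

lemma lblock_orth:
  assumes "U \<inter> V = {}"
  shows "(\<Sum>l\<in>U. lblock layer l (x l)) \<bullet> (\<Sum>l\<in>V. lblock layer l (y l)) = 0"
  unfolding inner_sum_left inner_sum_right
  using assms by (intro sum.neutral ballI) (auto intro: lblock_inner_diff)

lemma weighted_cs:
  fixes a c :: "nat \<Rightarrow> real"
  assumes "finite I" "\<forall>i\<in>I. a i > 0" "(\<Sum>i\<in>I. a i) = 1"
  shows "(\<Sum>i\<in>I. c i)\<^sup>2 \<le> (\<Sum>i\<in>I. (c i)\<^sup>2 / a i)"
proof -
  define s where "s = (\<Sum>i\<in>I. c i)"
  have "0 \<le> (\<Sum>i\<in>I. (c i - a i * s)\<^sup>2 / a i)"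
    using assms by (intro sum_nonneg) auto
  also have "\<dots> = (\<Sum>i\<in>I. (c i)\<^sup>2 / a i - 2 * s * c i + s\<^sup>2 * a i)"
    using assms by (intro sum.cong) (auto simp: field_simps power2_eq_square)
  also have "\<dots> = (\<Sum>i\<in>I. (c i)\<^sup>2 / a i) - 2 * s * s + s\<^sup>2 * 1"
    by (simp add: sum.distrib sum_subtractf sum_distrib_left[symmetric] s_def assms(3)[symmetric])
  finally show ?thesis by (simp add: s_def power2_eq_square)
qed

lemma descent:
  fixes f :: "'a::euclidean_space \<Rightarrow> real"
  assumes gd: "\<And>x. GDERIV f x :> g x"
    and lip: "\<And>x y. norm (g x - g y) \<le> \<gamma> * norm (x - y)"
  shows "f y \<le> f x + g x \<bullet> (y - x) + \<gamma> / 2 * (norm (y - x))\<^sup>2"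
proof -
  define h where "h = y - x"
  define \<phi> where "\<phi> s = f (x + s *\<^sub>R h) - s * (g x \<bullet> h) - \<gamma> / 2 * s\<^sup>2 * (norm h)\<^sup>2" for s
  have der: "(\<phi> has_real_derivative (g (x + s *\<^sub>R h) \<bullet> h - g x \<bullet> h - \<gamma> * s * (norm h)\<^sup>2)) (at s)" for s
  proof -
    have d1: "((\<lambda>s. x + s *\<^sub>R h) has_derivative (\<lambda>t. t *\<^sub>R h)) (at s)"
      by (auto intro!: derivative_eq_intros)
    have d2: "(f has_derivative (\<lambda>v. v \<bullet> g (x + s *\<^sub>R h))) (at (x + s *\<^sub>R h))"
      using gd unfolding gderiv_def by blast
    have "((\<lambda>s. f (x + s *\<^sub>R h)) has_derivative (\<lambda>t. (t *\<^sub>R h) \<bullet> g (x + s *\<^sub>R h))) (at s)"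
      using has_derivative_compose[OF d1 d2] .
    moreover have "(\<lambda>t. (t *\<^sub>R h) \<bullet> g (x + s *\<^sub>R h)) = (*) (g (x + s *\<^sub>R h) \<bullet> h)"
      by (auto simp: inner_commute)
    ultimately have "((\<lambda>s. f (x + s *\<^sub>R h)) has_real_derivative (g (x + s *\<^sub>R h) \<bullet> h)) (at s)"
      by (simp add: has_field_derivative_def)
    then show ?thesis unfolding \<phi>_def
      by (auto intro!: derivative_eq_intros)
  qed
  have "\<phi> 0 \<ge> \<phi> 1"
  proof (rule DERIV_nonpos_imp_nonincreasing[of 0 1])
    fix s :: real assume s: "0 \<le> s" "s \<le> 1"
    have "g (x + s *\<^sub>R h) \<bullet> h - g x \<bullet> h = (g (x + s *\<^sub>R h) - g x) \<bullet> h"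
      by (simp add: inner_diff_left)
    also have "\<dots> \<le> norm (g (x + s *\<^sub>R h) - g x) * norm h"
      by (rule norm_cauchy_schwarz)
    also have "\<dots> \<le> \<gamma> * norm (s *\<^sub>R h) * norm h"
      using lip[of "x + s *\<^sub>R h" x] by (intro mult_right_mono) auto
    also have "\<dots> = \<gamma> * s * (norm h)\<^sup>2"
      using s by (simp add: power2_eq_square)
    finally show "\<exists>y. (\<phi> has_real_derivative y) (at s) \<and> y \<le> 0"
      using der[of s] by (intro exI[of _ "g (x + s *\<^sub>R h) \<bullet> h - g x \<bullet> h - \<gamma> * s * (norm h)\<^sup>2"]) auto
  qed simp
  then show ?thesis unfolding \<phi>_def h_def by (simp add: inner_commute)
qed



lemma pmf_integrable_bdd:
  fixes f :: "'a \<Rightarrow> 'c::{banach, second_countable_topology}"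
  assumes "\<forall>y\<in>set_pmf M. norm (f y) \<le> B"
  shows "integrable (measure_pmf M) f"
  by (rule measure_pmf.integrable_const_bound[where B=B]) (use assms in \<open>auto simp: AE_measure_pmf_iff\<close>)

lemma pmf_bind_integral:
  fixes f :: "'b \<Rightarrow> real"
  assumes bd: "\<forall>y\<in>set_pmf (bind_pmf M N). \<bar>f y\<bar> \<le> B"
  shows "measure_pmf.expectation (bind_pmf M N) f
       = measure_pmf.expectation M (\<lambda>x. measure_pmf.expectation (N x) f)"
proof -
  define g where "g y = max (- \<bar>B\<bar>) (min \<bar>B\<bar> (f y))" for y
  have fg: "g y = f y" if "y \<in> set_pmf (bind_pmf M N)" for y
  proof -
    have "\<bar>f y\<bar> \<le> B" using bd that by blast
    then show ?thesis by (simp add: g_def)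
  qed
  have "measure_pmf.expectation (bind_pmf M N) f = measure_pmf.expectation (bind_pmf M N) g"
    by (intro integral_cong_AE) (auto simp: AE_measure_pmf_iff fg)
  also have "\<dots> = (\<integral>x. measure_pmf.expectation (N x) g \<partial>measure_pmf M)"
    unfolding measure_pmf_bind
    by (rule integral_bind[where K="count_space UNIV" and B="\<bar>B\<bar>" and B'=1])
       (auto simp: g_def measurable_measure_pmf measure_pmf.finite_measure
             measure_pmf.emeasure_space_1 intro: measurable_space[OF measurable_measure_pmf[of N]])
  also have "\<dots> = measure_pmf.expectation M (\<lambda>x. measure_pmf.expectation (N x) f)"
    by (intro integral_cong_AE) (auto simp: AE_measure_pmf_iff intro!: integral_cong_AE fg bexI)
  finally show ?thesis .
qed



locale flsetup =
  fixes N L :: nat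
    and layer :: "'p::finite \<Rightarrow> nat"
    and F :: "nat \<Rightarrow> 'b \<Rightarrow> real^'p \<Rightarrow> real"
    and D :: "nat \<Rightarrow> 'b set"
    and Q :: "nat \<Rightarrow> 'b pmf"
    and S :: "nat \<Rightarrow> nat set"
    and Ls :: "nat \<Rightarrow> nat \<Rightarrow> nat set"
    and \<eta> \<gamma> \<sigma> :: real
    and \<sigma>l \<kappa> :: "nat \<Rightarrow> real"
    and \<theta>0 \<theta>s :: "real^'p"
  assumes N_pos: "N > 0"
    and layer_range: "\<forall>j. layer j \<in> {1..L}"
    and data: "\<forall>i\<in>{1..N}. finite (D i) \<and> D i \<noteq> {}"
    and S_sub: "\<forall>t. S t \<subseteq> {1..N}"
    and Ls_sub: "\<forall>t. \<forall>i\<in>S t. Ls t i \<subseteq> {1..L}"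
    and diff: "\<forall>i\<in>{1..N}. \<forall>\<xi>\<in>D i \<union> set_pmf (Q i). \<forall>\<theta>. F i \<xi> differentiable (at \<theta>)"
    and minimizer: "\<forall>\<theta>. fglob N F D \<theta>s \<le> fglob N F D \<theta>"
    and eta_pos: "\<eta> > 0"
    and gamma_pos: "\<gamma> > 0"
    and smooth: "\<forall>i\<in>{1..N}. \<forall>\<theta> \<theta>'.
        norm (grad (fobj F D i) \<theta> - grad (fobj F D i) \<theta>') \<le> \<gamma> * norm (\<theta> - \<theta>')"
    and unbiased: "\<forall>i\<in>{1..N}. \<forall>l\<in>{1..L}. \<forall>\<theta>.
        measure_pmf.expectation (Q i) (\<lambda>\<xi>. sgrad layer F i l \<theta> \<xi>)
          = lblock layer l (grad (fobj F D i) \<theta>)"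
    and bounded_var: "\<forall>i\<in>{1..N}. \<forall>l\<in>{1..L}. \<forall>\<theta>. \<forall>\<xi>\<in>set_pmf (Q i).
        (norm (sgrad layer F i l \<theta> \<xi> - lblock layer l (grad (fobj F D i) \<theta>)))\<^sup>2 \<le> (\<sigma>l l)\<^sup>2"
    and sigma_sum: "\<forall>t. (\<Sum>l\<in>Lsel S Ls t. (\<sigma>l l)\<^sup>2) \<le> \<sigma>\<^sup>2"
    and diversity: "\<forall>i\<in>{1..N}. \<forall>l\<in>{1..L}. \<forall>\<theta>.
        (norm (lblock layer l (grad (fglob N F D) \<theta>) - lblock layer l (grad (fobj F D i) \<theta>)))\<^sup>2
          \<le> (\<kappa> l)\<^sup>2"
    and C_pos: "1 - 4 * \<eta> * \<gamma> > 0"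
begin

abbreviation "ff \<equiv> fglob N F D"
abbreviation "gf \<equiv> grad (fglob N F D)"
abbreviation "gi i \<equiv> grad (fobj F D i)"
abbreviation "\<alpha> \<equiv> alpha N D"

lemma card_pos: "i \<in> {1..N} \<Longrightarrow> real (card (D i)) > 0"
  using data by (auto simp: card_gt_0_iff)

lemma alpha_pos: "i \<in> {1..N} \<Longrightarrow> \<alpha> i > 0"
proof -
  assume i: "i \<in> {1..N}"
  have "(\<Sum>j\<in>{1..N}. real (card (D j))) > 0"
    using i card_pos by (intro sum_pos2[of _ i]) auto
  then show ?thesis using card_pos[OF i] by (simp add: alpha_def)
qed

lemma alpha_sum: "(\<Sum>i\<in>{1..N}. \<alpha> i) = 1"
proof -
  have "(\<Sum>j\<in>{1..N}. real (card (D j))) > 0"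
    using N_pos card_pos by (intro sum_pos2[of _ 1]) auto
  then show ?thesis by (simp add: alpha_def sum_divide_distrib[symmetric])
qed

lemma fi_gderiv: "i \<in> {1..N} \<Longrightarrow> GDERIV (fobj F D i) \<theta> :> gi i \<theta>"
proof -
  assume i: "i \<in> {1..N}"
  have d: "GDERIV (F i \<xi>) \<theta> :> grad (F i \<xi>) \<theta>" if "\<xi> \<in> D i" for \<xi>
    using diff i that by (intro grad_has) auto
  have "((\<lambda>\<theta>. \<Sum>\<xi>\<in>D i. F i \<xi> \<theta>) has_derivative (\<lambda>h. \<Sum>\<xi>\<in>D i. h \<bullet> grad (F i \<xi>) \<theta>)) (at \<theta>)"
    using d unfolding gderiv_def by (intro has_derivative_sum) auto
  then have "((\<lambda>\<theta>. (1 / real (card (D i))) * (\<Sum>\<xi>\<in>D i. F i \<xi> \<theta>)) has_derivative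
       (\<lambda>h. (1 / real (card (D i))) * (\<Sum>\<xi>\<in>D i. h \<bullet> grad (F i \<xi>) \<theta>))) (at \<theta>)"
    by (rule has_derivative_mult_right)
  moreover have "(\<lambda>h. (1 / real (card (D i))) * (\<Sum>\<xi>\<in>D i. h \<bullet> grad (F i \<xi>) \<theta>))
      = (\<lambda>h. h \<bullet> ((1 / real (card (D i))) *\<^sub>R (\<Sum>\<xi>\<in>D i. grad (F i \<xi>) \<theta>)))"
    by (simp add: inner_sum_right)
  moreover have "fobj F D i = (\<lambda>\<theta>. (1 / real (card (D i))) * (\<Sum>\<xi>\<in>D i. F i \<xi> \<theta>))"
    by (simp add: fobj_def fun_eq_iff)
  ultimately have "GDERIV (fobj F D i) \<theta> :> ((1 / real (card (D i))) *\<^sub>R (\<Sum>\<xi>\<in>D i. grad (F i \<xi>) \<theta>))"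
    unfolding gderiv_def by simp
  then show ?thesis using grad_eq by metis
qed

lemma f_gderiv_aux: "GDERIV ff \<theta> :> (\<Sum>i\<in>{1..N}. \<alpha> i *\<^sub>R gi i \<theta>)"
proof -
  have "((\<lambda>\<theta>. \<Sum>i\<in>{1..N}. \<alpha> i * fobj F D i \<theta>) has_derivative
        (\<lambda>h. \<Sum>i\<in>{1..N}. \<alpha> i * (h \<bullet> gi i \<theta>))) (at \<theta>)"
    using fi_gderiv unfolding gderiv_def
    by (intro has_derivative_sum has_derivative_mult_right) auto
  moreover have "(\<lambda>h. \<Sum>i\<in>{1..N}. \<alpha> i * (h \<bullet> gi i \<theta>)) = (\<lambda>h. h \<bullet> (\<Sum>i\<in>{1..N}. \<alpha> i *\<^sub>R gi i \<theta>))"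
    by (simp add: inner_sum_right)
  moreover have "ff = (\<lambda>\<theta>. \<Sum>i\<in>{1..N}. \<alpha> i * fobj F D i \<theta>)"
    by (simp add: fglob_def fun_eq_iff)
  ultimately show ?thesis unfolding gderiv_def by simp
qed

lemma gf_eq: "gf \<theta> = (\<Sum>i\<in>{1..N}. \<alpha> i *\<^sub>R gi i \<theta>)"
  using f_gderiv_aux grad_eq by metis

lemma f_gderiv: "GDERIV ff \<theta> :> gf \<theta>"
  using f_gderiv_aux gf_eq by metis

lemma gf_lip: "norm (gf x - gf y) \<le> \<gamma> * norm (x - y)"
proof -
  have "norm (gf x - gf y) = norm (\<Sum>i\<in>{1..N}. \<alpha> i *\<^sub>R (gi i x - gi i y))"
    by (simp add: gf_eq sum_subtractf scaleR_diff_right)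
  also have "\<dots> \<le> (\<Sum>i\<in>{1..N}. norm (\<alpha> i *\<^sub>R (gi i x - gi i y)))"
    by (rule norm_sum)
  also have "\<dots> \<le> (\<Sum>i\<in>{1..N}. \<alpha> i * (\<gamma> * norm (x - y)))"
    using alpha_pos smooth by (intro sum_mono) (auto intro!: mult_left_mono simp: less_imp_le)
  also have "\<dots> = \<gamma> * norm (x - y)"
    using alpha_sum by (simp add: sum_distrib_right[symmetric])
  finally show ?thesis .
qed

lemma f_descent: "ff y \<le> ff x + gf x \<bullet> (y - x) + \<gamma> / 2 * (norm (y - x))\<^sup>2"
  by (rule descent[OF f_gderiv gf_lip])

end


context flsetup begin

definition Afn :: "nat \<Rightarrow> real^'p \<Rightarrow> real^'p" where
  "Afn t \<theta> = (\<Sum>l\<in>Lsel S Ls t. lblock layer l (gf \<theta>))"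
definition Bfn :: "nat \<Rightarrow> real^'p \<Rightarrow> real^'p" where
  "Bfn t \<theta> = (\<Sum>l\<in>{1..L} - Lsel S Ls t. lblock layer l (gf \<theta>))"
definition Gbar :: "nat \<Rightarrow> real^'p \<Rightarrow> real^'p" where
  "Gbar t \<theta> = (\<Sum>l\<in>Lsel S Ls t. \<Sum>i\<in>S t. wgt D S Ls t i l *\<^sub>R lblock layer l (gi i \<theta>))"
definition Gs :: "nat \<Rightarrow> real^'p \<Rightarrow> (nat \<Rightarrow> 'b) \<Rightarrow> real^'p" where
  "Gs t \<theta> \<xi> = (\<Sum>l\<in>Lsel S Ls t. \<Sum>i\<in>S t. wgt D S Ls t i l *\<^sub>R sgrad layer F i l \<theta> (\<xi> i))"
definition E2 :: "nat \<Rightarrow> real" where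
  "E2 t = (\<Sum>l\<in>Lsel S Ls t. chi2 N D S Ls t l * (\<kappa> l)\<^sup>2)"

lemma sum_split_sub: "B \<subseteq> A \<Longrightarrow> finite A \<Longrightarrow> sum f A = sum f B + sum f (A - B)"
  using sum.subset_diff[of B A f] by (simp add: add.commute)

lemma S_fin: "finite (S t)"
  using S_sub finite_subset by blast

lemma U_sub: "Lsel S Ls t \<subseteq> {1..L}"
  using Ls_sub by (auto simp: Lsel_def)

lemma U_fin: "finite (Lsel S Ls t)"
  using U_sub finite_subset by blast

lemma w_nonneg: "wgt D S Ls t i l \<ge> 0"
  by (simp add: wgt_def sum_nonneg)

lemma w_out: "i \<notin> S t \<Longrightarrow> wgt D S Ls t i l = 0"
  by (simp add: wgt_def)

lemma w_sum: "l \<in> Lsel S Ls t \<Longrightarrow> (\<Sum>i\<in>S t. wgt D S Ls t i l) = 1"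
proof -
  assume l: "l \<in> Lsel S Ls t"
  define J where "J = {j\<in>S t. l \<in> Ls t j}"
  obtain j where j: "j \<in> S t" "l \<in> Ls t j" using l by (auto simp: Lsel_def)
  have Jfin: "finite J" using S_fin by (simp add: J_def)
  have "(\<Sum>j\<in>J. real (card (D j))) > 0"
  proof -
    have "j \<in> {1..N}" using j(1) S_sub by blast
    then show ?thesis using j card_pos Jfin by (intro sum_pos2[of _ j]) (auto simp: J_def)
  qed
  moreover have "(\<Sum>i\<in>S t. wgt D S Ls t i l) = (\<Sum>i\<in>S t. if l \<in> Ls t i then real (card (D i)) / (\<Sum>j\<in>J. real (card (D j))) else 0)"
    by (intro sum.cong) (auto simp: wgt_def J_def)
  moreover have "\<dots> = (\<Sum>i\<in>J. real (card (D i)) / (\<Sum>j\<in>J. real (card (D j))))"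
    unfolding J_def using S_fin by (rule sum.inter_filter[symmetric])
  ultimately show ?thesis by (simp add: sum_divide_distrib[symmetric])
qed

lemma w_sum_N: "(\<Sum>i\<in>{1..N}. g (wgt D S Ls t i l) i) = (\<Sum>i\<in>S t. g (wgt D S Ls t i l) i) + (\<Sum>i\<in>{1..N} - S t. g 0 i)"
proof -
  have "(\<Sum>i\<in>{1..N}. g (wgt D S Ls t i l) i) = (\<Sum>i\<in>S t. g (wgt D S Ls t i l) i) + (\<Sum>i\<in>{1..N} - S t. g (wgt D S Ls t i l) i)"
    using S_sub by (intro sum_split_sub) auto
  also have "(\<Sum>i\<in>{1..N} - S t. g (wgt D S Ls t i l) i) = (\<Sum>i\<in>{1..N} - S t. g 0 i)"
    by (intro sum.cong) (auto simp: w_out)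
  finally show ?thesis .
qed

lemma AB_sum: "Afn t \<theta> + Bfn t \<theta> = gf \<theta>"
proof -
  have "Afn t \<theta> + Bfn t \<theta> = (\<Sum>l\<in>{1..L}. lblock layer l (gf \<theta>))"
    unfolding Afn_def Bfn_def using U_sub
    by (intro sum_split_sub[symmetric]) auto
  also have "\<dots> = gf \<theta>" using layer_range by (intro lblock_sum_layers) auto
  finally show ?thesis .
qed

lemma AB_norm: "(norm (gf \<theta>))\<^sup>2 = (norm (Afn t \<theta>))\<^sup>2 + (norm (Bfn t \<theta>))\<^sup>2"
proof -
  have o: "Afn t \<theta> \<bullet> Bfn t \<theta> = 0" unfolding Afn_def Bfn_def by (rule lblock_orth) auto
  show ?thesis unfolding AB_sum[where t=t and \<theta>=\<theta>, symmetric] power2_norm_eq_inner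
    using o by (simp add: inner_add_left inner_add_right inner_commute)
qed

end


lemma Pi_comp_int:
  fixes h :: "'b \<Rightarrow> real"
  assumes "finite A" "i \<in> A"
  shows "measure_pmf.expectation (Pi_pmf A d Q) (\<lambda>\<xi>. h (\<xi> i)) = measure_pmf.expectation (Q i) h"
proof -
  have "map_pmf (\<lambda>f. f i) (Pi_pmf A d Q) = Q i" using Pi_pmf_component[OF assms(1), where x=i and dflt=d and p=Q] assms(2) by simp
  then show ?thesis using integral_map_pmf[of "\<lambda>f. f i" "Pi_pmf A d Q" h] by simp
qed

lemma Pi_comp_integrable:
  fixes h :: "'b \<Rightarrow> real"
  assumes "finite A" "i \<in> A" "integrable (measure_pmf (Q i)) h"
  shows "integrable (measure_pmf (Pi_pmf A d Q)) (\<lambda>\<xi>. h (\<xi> i))"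
proof -
  have "map_pmf (\<lambda>f. f i) (Pi_pmf A d Q) = Q i" using Pi_pmf_component[OF assms(1), where x=i and dflt=d and p=Q] assms(2) by simp
  then show ?thesis using assms(3) integrable_map_pmf_eq[of "\<lambda>f. f i" "Pi_pmf A d Q" h] by simp
qed



context flsetup begin
lemma delta_l:
  assumes l: "l \<in> Lsel S Ls t"
  shows "(norm (lblock layer l (gf \<theta> - (\<Sum>i\<in>S t. wgt D S Ls t i l *\<^sub>R gi i \<theta>))))\<^sup>2
         \<le> chi2 N D S Ls t l * (\<kappa> l)\<^sup>2"
proof -
  have lL: "l \<in> {1..L}" using l U_sub by blast
  define c where "c i = wgt D S Ls t i l - \<alpha> i" for i
  have csum: "(\<Sum>i\<in>{1..N}. c i) = 0"
    unfolding c_def sum_subtractf using w_sum_N[of "\<lambda>x i. x" t l] w_sum[OF l] alpha_sum by simp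
  have s1: "(\<Sum>i\<in>{1..N}. c i *\<^sub>R lblock layer l (gf \<theta>)) = 0"
    using csum by (simp add: scaleR_sum_left[symmetric])
  have s2: "(\<Sum>i\<in>{1..N}. c i *\<^sub>R lblock layer l (gi i \<theta>))
      = (\<Sum>i\<in>S t. wgt D S Ls t i l *\<^sub>R lblock layer l (gi i \<theta>)) - lblock layer l (gf \<theta>)"
  proof -
    have "(\<Sum>i\<in>{1..N}. c i *\<^sub>R lblock layer l (gi i \<theta>))
        = (\<Sum>i\<in>{1..N}. wgt D S Ls t i l *\<^sub>R lblock layer l (gi i \<theta>)) - (\<Sum>i\<in>{1..N}. \<alpha> i *\<^sub>R lblock layer l (gi i \<theta>))"
      by (simp add: c_def scaleR_diff_left sum_subtractf)
    also have "(\<Sum>i\<in>{1..N}. wgt D S Ls t i l *\<^sub>R lblock layer l (gi i \<theta>))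
        = (\<Sum>i\<in>S t. wgt D S Ls t i l *\<^sub>R lblock layer l (gi i \<theta>))"
      using w_sum_N[of "\<lambda>x i. x *\<^sub>R lblock layer l (gi i \<theta>)" t l] by simp
    also have "(\<Sum>i\<in>{1..N}. \<alpha> i *\<^sub>R lblock layer l (gi i \<theta>)) = lblock layer l (gf \<theta>)"
      by (simp add: gf_eq lblock_sum lblock_scaleR)
    finally show ?thesis .
  qed
  have key: "lblock layer l (gf \<theta> - (\<Sum>i\<in>S t. wgt D S Ls t i l *\<^sub>R gi i \<theta>))
      = (\<Sum>i\<in>{1..N}. c i *\<^sub>R (lblock layer l (gf \<theta>) - lblock layer l (gi i \<theta>)))"
    by (simp only: scaleR_diff_right sum_subtractf s1 s2) (simp add: lblock_diff lblock_sum lblock_scaleR)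
  have kap: "norm (lblock layer l (gf \<theta>) - lblock layer l (gi i \<theta>)) \<le> \<bar>\<kappa> l\<bar>" if "i \<in> {1..N}" for i
  proof -
    have "(norm (lblock layer l (gf \<theta>) - lblock layer l (gi i \<theta>)))\<^sup>2 \<le> (\<kappa> l)\<^sup>2"
      using diversity that lL by blast
    then show ?thesis by (metis abs_le_square_iff abs_norm_cancel)
  qed
  have "norm (lblock layer l (gf \<theta> - (\<Sum>i\<in>S t. wgt D S Ls t i l *\<^sub>R gi i \<theta>)))
      \<le> (\<Sum>i\<in>{1..N}. norm (c i *\<^sub>R (lblock layer l (gf \<theta>) - lblock layer l (gi i \<theta>))))"
    unfolding key by (rule norm_sum)
  also have "\<dots> \<le> (\<Sum>i\<in>{1..N}. \<bar>c i\<bar> * \<bar>\<kappa> l\<bar>)"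
    using kap by (intro sum_mono) (auto intro: mult_left_mono)
  also have "\<dots> = \<bar>\<kappa> l\<bar> * (\<Sum>i\<in>{1..N}. \<bar>c i\<bar>)"
    by (simp add: sum_distrib_left mult.commute)
  finally have n1: "norm (lblock layer l (gf \<theta> - (\<Sum>i\<in>S t. wgt D S Ls t i l *\<^sub>R gi i \<theta>)))
      \<le> \<bar>\<kappa> l\<bar> * (\<Sum>i\<in>{1..N}. \<bar>c i\<bar>)" .
  have cs: "(\<Sum>i\<in>{1..N}. \<bar>c i\<bar>)\<^sup>2 \<le> (\<Sum>i\<in>{1..N}. \<bar>c i\<bar>\<^sup>2 / \<alpha> i)"
    using alpha_pos alpha_sum by (intro weighted_cs) auto
  have chi: "(\<Sum>i\<in>{1..N}. \<bar>c i\<bar>\<^sup>2 / \<alpha> i) = chi2 N D S Ls t l"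
    by (simp add: chi2_def c_def)
  have "(norm (lblock layer l (gf \<theta> - (\<Sum>i\<in>S t. wgt D S Ls t i l *\<^sub>R gi i \<theta>))))\<^sup>2
      \<le> (\<bar>\<kappa> l\<bar> * (\<Sum>i\<in>{1..N}. \<bar>c i\<bar>))\<^sup>2"
    using n1 by (intro power_mono) auto
  also have "\<dots> = (\<kappa> l)\<^sup>2 * (\<Sum>i\<in>{1..N}. \<bar>c i\<bar>)\<^sup>2"
    by (simp add: power_mult_distrib)
  also have "\<dots> \<le> (\<kappa> l)\<^sup>2 * chi2 N D S Ls t l"
    using cs chi by (intro mult_left_mono) auto
  finally show ?thesis by (simp add: mult.commute)
qed

end


context flsetup begin
lemma delta_bound: "(norm (Afn t \<theta> - Gbar t \<theta>))\<^sup>2 \<le> E2 t"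
proof -
  have eq: "Afn t \<theta> - Gbar t \<theta>
      = (\<Sum>l\<in>Lsel S Ls t. lblock layer l (gf \<theta> - (\<Sum>i\<in>S t. wgt D S Ls t i l *\<^sub>R gi i \<theta>)))"
    unfolding Afn_def Gbar_def by (simp add: lblock_diff lblock_sum lblock_scaleR sum_subtractf)
  show ?thesis unfolding eq lblock_pyth[OF U_fin] E2_def
    by (intro sum_mono delta_l)
qed

end


context flsetup begin
lemma noise_l:
  assumes l: "l \<in> Lsel S Ls t" and xi: "\<forall>i\<in>S t. \<xi> i \<in> set_pmf (Q i)"
  shows "(norm (lblock layer l (\<Sum>i\<in>S t. wgt D S Ls t i l *\<^sub>R (grad (F i (\<xi> i)) \<theta> - gi i \<theta>))))\<^sup>2
         \<le> (\<sigma>l l)\<^sup>2"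
proof -
  have lL: "l \<in> {1..L}" using l U_sub by blast
  have b: "norm (sgrad layer F i l \<theta> (\<xi> i) - lblock layer l (gi i \<theta>)) \<le> \<bar>\<sigma>l l\<bar>" if "i \<in> S t" for i
  proof -
    have iN: "i \<in> {1..N}" using that S_sub by blast
    have xs: "\<xi> i \<in> set_pmf (Q i)" using xi that by blast
    have "(norm (sgrad layer F i l \<theta> (\<xi> i) - lblock layer l (gi i \<theta>)))\<^sup>2 \<le> (\<sigma>l l)\<^sup>2"
      using bounded_var[rule_format, OF iN lL xs] .
    then show ?thesis by (metis abs_le_square_iff abs_norm_cancel)
  qed
  have "norm (lblock layer l (\<Sum>i\<in>S t. wgt D S Ls t i l *\<^sub>R (grad (F i (\<xi> i)) \<theta> - gi i \<theta>)))
      = norm (\<Sum>i\<in>S t. wgt D S Ls t i l *\<^sub>R (sgrad layer F i l \<theta> (\<xi> i) - lblock layer l (gi i \<theta>)))"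
    by (simp add: sgrad_def lblock_sum lblock_scaleR lblock_diff)
  also have "\<dots> \<le> (\<Sum>i\<in>S t. norm (wgt D S Ls t i l *\<^sub>R (sgrad layer F i l \<theta> (\<xi> i) - lblock layer l (gi i \<theta>))))"
    by (rule norm_sum)
  also have "\<dots> \<le> (\<Sum>i\<in>S t. wgt D S Ls t i l * \<bar>\<sigma>l l\<bar>)"
  proof (rule sum_mono)
    fix i assume i: "i \<in> S t"
    show "norm (wgt D S Ls t i l *\<^sub>R (sgrad layer F i l \<theta> (\<xi> i) - lblock layer l (gi i \<theta>)))
        \<le> wgt D S Ls t i l * \<bar>\<sigma>l l\<bar>"
      using b[OF i] w_nonneg[of t i l] by (simp add: mult_left_mono)
  qed
  also have "\<dots> = \<bar>\<sigma>l l\<bar>"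
    by (simp add: sum_distrib_right[symmetric] w_sum[OF l])
  finally have "norm (lblock layer l (\<Sum>i\<in>S t. wgt D S Ls t i l *\<^sub>R (grad (F i (\<xi> i)) \<theta> - gi i \<theta>))) \<le> \<bar>\<sigma>l l\<bar>" .
  then have "(norm (lblock layer l (\<Sum>i\<in>S t. wgt D S Ls t i l *\<^sub>R (grad (F i (\<xi> i)) \<theta> - gi i \<theta>))))\<^sup>2 \<le> \<bar>\<sigma>l l\<bar>\<^sup>2"
    by (intro power_mono) auto
  then show ?thesis by simp
qed

end


context flsetup begin
lemma noise_bound:
  assumes xi: "\<forall>i\<in>S t. \<xi> i \<in> set_pmf (Q i)"
  shows "(norm (Gs t \<theta> \<xi> - Gbar t \<theta>))\<^sup>2 \<le> \<sigma>\<^sup>2"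
proof -
  have eq: "Gs t \<theta> \<xi> - Gbar t \<theta>
      = (\<Sum>l\<in>Lsel S Ls t. lblock layer l (\<Sum>i\<in>S t. wgt D S Ls t i l *\<^sub>R (grad (F i (\<xi> i)) \<theta> - gi i \<theta>)))"
    unfolding Gs_def Gbar_def
    by (simp add: sgrad_def lblock_diff lblock_sum lblock_scaleR sum_subtractf scaleR_diff_right)
  have "(norm (Gs t \<theta> \<xi> - Gbar t \<theta>))\<^sup>2 \<le> (\<Sum>l\<in>Lsel S Ls t. (\<sigma>l l)\<^sup>2)"
    unfolding eq lblock_pyth[OF U_fin] using xi by (intro sum_mono noise_l) auto
  also have "\<dots> \<le> \<sigma>\<^sup>2" using sigma_sum by blast
  finally show ?thesis .
qed


end


lemma sq_le_abs: "(x::real)\<^sup>2 \<le> y\<^sup>2 \<Longrightarrow> x \<le> \<bar>y\<bar>"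
proof -
  assume "x\<^sup>2 \<le> y\<^sup>2"
  then have "x\<^sup>2 \<le> \<bar>y\<bar>\<^sup>2" by simp
  then show ?thesis using power2_le_imp_le by (metis abs_ge_zero)
qed

lemma norm_add_sq_le: "(norm (a + b :: 'a::real_inner))\<^sup>2 \<le> 2 * (norm a)\<^sup>2 + 2 * (norm b)\<^sup>2"
proof -
  have "0 \<le> (a - b) \<bullet> (a - b)" by simp
  then show ?thesis
    by (simp add: power2_norm_eq_inner inner_add_left inner_add_right inner_diff_left inner_diff_right inner_commute)
qed

lemma inner_le_half: "(a::'a::real_inner) \<bullet> b \<le> ((norm a)\<^sup>2 + (norm b)\<^sup>2) / 2"
proof -
  have "0 \<le> (a - b) \<bullet> (a - b)" by simp
  then show ?thesis
    by (simp add: power2_norm_eq_inner inner_diff_left inner_diff_right inner_commute)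
qed

context flsetup begin

lemma sg_bound:
  assumes i: "i \<in> {1..N}" and l: "l \<in> {1..L}" and xs: "\<xi> \<in> set_pmf (Q i)"
  shows "norm (sgrad layer F i l \<theta> \<xi>) \<le> norm (lblock layer l (gi i \<theta>)) + \<bar>\<sigma>l l\<bar>"
proof -
  have "norm (sgrad layer F i l \<theta> \<xi> - lblock layer l (gi i \<theta>)) \<le> \<bar>\<sigma>l l\<bar>"
    using bounded_var[rule_format, OF i l xs] by (rule sq_le_abs)
  then show ?thesis using norm_triangle_sub[of "sgrad layer F i l \<theta> \<xi>" "lblock layer l (gi i \<theta>)"] by linarith
qed

lemma sg_integrable:
  assumes i: "i \<in> {1..N}" and l: "l \<in> {1..L}"
  shows "integrable (measure_pmf (Q i)) (\<lambda>\<xi>. sgrad layer F i l \<theta> \<xi>)"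
  using sg_bound[OF i l] by (intro pmf_integrable_bdd) blast

lemma sg_inner_integrable:
  assumes i: "i \<in> {1..N}" and l: "l \<in> {1..L}"
  shows "integrable (measure_pmf (Q i)) (\<lambda>\<xi>. v \<bullet> sgrad layer F i l \<theta> \<xi>)"
proof (rule pmf_integrable_bdd[where B="norm v * (norm (lblock layer l (gi i \<theta>)) + \<bar>\<sigma>l l\<bar>)"], intro ballI)
  fix \<xi> assume xs: "\<xi> \<in> set_pmf (Q i)"
  have "norm (v \<bullet> sgrad layer F i l \<theta> \<xi>) \<le> norm v * norm (sgrad layer F i l \<theta> \<xi>)"
    using Cauchy_Schwarz_ineq2 by simp
  also have "\<dots> \<le> norm v * (norm (lblock layer l (gi i \<theta>)) + \<bar>\<sigma>l l\<bar>)"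
    using sg_bound[OF i l xs] by (intro mult_left_mono) auto
  finally show "norm (v \<bullet> sgrad layer F i l \<theta> \<xi>) \<le> norm v * (norm (lblock layer l (gi i \<theta>)) + \<bar>\<sigma>l l\<bar>)" .
qed

lemma sg_exp:
  assumes i: "i \<in> {1..N}" and l: "l \<in> {1..L}"
  shows "measure_pmf.expectation (Q i) (\<lambda>\<xi>. v \<bullet> sgrad layer F i l \<theta> \<xi>) = v \<bullet> lblock layer l (gi i \<theta>)"
  using sg_integrable[OF i l] unbiased i l by simp

abbreviation "PQ t \<equiv> Pi_pmf (S t) undefined Q"

lemma PQ_supp: "\<xi> \<in> set_pmf (PQ t) \<Longrightarrow> \<forall>i\<in>S t. \<xi> i \<in> set_pmf (Q i)"
  using set_Pi_pmf[OF S_fin[of t], of undefined Q] by (auto simp: PiE_dflt_def)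

lemma li_facts:
  assumes l: "l \<in> Lsel S Ls t" and i: "i \<in> S t"
  shows "integrable (measure_pmf (PQ t)) (\<lambda>\<xi>. wgt D S Ls t i l * (v \<bullet> sgrad layer F i l \<theta> (\<xi> i)))"
    and "measure_pmf.expectation (PQ t) (\<lambda>\<xi>. wgt D S Ls t i l * (v \<bullet> sgrad layer F i l \<theta> (\<xi> i)))
         = wgt D S Ls t i l * (v \<bullet> lblock layer l (gi i \<theta>))"
proof -
  have lL: "l \<in> {1..L}" using l U_sub by blast
  have iN: "i \<in> {1..N}" using i S_sub by blast
  show "integrable (measure_pmf (PQ t)) (\<lambda>\<xi>. wgt D S Ls t i l * (v \<bullet> sgrad layer F i l \<theta> (\<xi> i)))"
    using Pi_comp_integrable[where A="S t" and i=i and Q=Q and d=undefined and h="\<lambda>\<xi>. v \<bullet> sgrad layer F i l \<theta> \<xi>", OF S_fin i sg_inner_integrable[OF iN lL]]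
    by (rule integrable_mult_right)
  show "measure_pmf.expectation (PQ t) (\<lambda>\<xi>. wgt D S Ls t i l * (v \<bullet> sgrad layer F i l \<theta> (\<xi> i)))
         = wgt D S Ls t i l * (v \<bullet> lblock layer l (gi i \<theta>))"
    using Pi_comp_int[where A="S t" and i=i and Q=Q and d=undefined and h="\<lambda>\<xi>. v \<bullet> sgrad layer F i l \<theta> \<xi>", OF S_fin i] sg_exp[OF iN lL]
    by simp
qed

lemma Gs_inner_eq: "v \<bullet> Gs t \<theta> \<xi> = (\<Sum>l\<in>Lsel S Ls t. \<Sum>i\<in>S t. wgt D S Ls t i l * (v \<bullet> sgrad layer F i l \<theta> (\<xi> i)))"
  by (simp add: Gs_def inner_sum_right)

lemma Gs_inner_integrable: "integrable (measure_pmf (PQ t)) (\<lambda>\<xi>. v \<bullet> Gs t \<theta> \<xi>)"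
  unfolding Gs_inner_eq by (intro Bochner_Integration.integrable_sum li_facts(1))

lemma exp_lin: "measure_pmf.expectation (PQ t) (\<lambda>\<xi>. v \<bullet> Gs t \<theta> \<xi>) = v \<bullet> Gbar t \<theta>"
proof -
  have "measure_pmf.expectation (PQ t) (\<lambda>\<xi>. v \<bullet> Gs t \<theta> \<xi>)
      = (\<Sum>l\<in>Lsel S Ls t. measure_pmf.expectation (PQ t) (\<lambda>\<xi>. \<Sum>i\<in>S t. wgt D S Ls t i l * (v \<bullet> sgrad layer F i l \<theta> (\<xi> i))))"
    unfolding Gs_inner_eq by (intro Bochner_Integration.integral_sum Bochner_Integration.integrable_sum li_facts(1))
  also have "\<dots> = (\<Sum>l\<in>Lsel S Ls t. \<Sum>i\<in>S t. wgt D S Ls t i l * (v \<bullet> lblock layer l (gi i \<theta>)))"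
  proof (rule sum.cong[OF refl])
    fix l assume l: "l \<in> Lsel S Ls t"
    show "measure_pmf.expectation (PQ t) (\<lambda>\<xi>. \<Sum>i\<in>S t. wgt D S Ls t i l * (v \<bullet> sgrad layer F i l \<theta> (\<xi> i)))
        = (\<Sum>i\<in>S t. wgt D S Ls t i l * (v \<bullet> lblock layer l (gi i \<theta>)))"
      using li_facts[OF l] by (subst Bochner_Integration.integral_sum) (auto intro!: sum.cong simp del: integral_mult_right_zero)
  qed
  also have "\<dots> = v \<bullet> Gbar t \<theta>"
    by (simp add: Gbar_def inner_sum_right)
  finally show ?thesis .
qed

end


context flsetup begin

definition K :: "nat \<Rightarrow> real" where
  "K t = (\<eta> / 2 + 2 * \<gamma> * \<eta>\<^sup>2) * E2 t + \<gamma> * \<eta>\<^sup>2 * \<sigma>\<^sup>2"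

lemma delta_eq: "Afn t \<theta> - Gbar t \<theta>
      = (\<Sum>l\<in>Lsel S Ls t. lblock layer l (gf \<theta> - (\<Sum>i\<in>S t. wgt D S Ls t i l *\<^sub>R gi i \<theta>)))"
  unfolding Afn_def Gbar_def by (simp add: lblock_diff lblock_sum lblock_scaleR sum_subtractf)

lemma B_orth_A: "Bfn t \<theta> \<bullet> Afn t \<theta> = 0"
  unfolding Bfn_def Afn_def by (rule lblock_orth) auto

lemma B_orth_D: "Bfn t \<theta> \<bullet> (Afn t \<theta> - Gbar t \<theta>) = 0"
  unfolding Bfn_def delta_eq by (rule lblock_orth) auto

lemma E2_nonneg: "E2 t \<ge> 0"
  using delta_bound[of t \<theta>0] by (meson order_trans zero_le_power2)

lemma det_bound:
  "- \<eta> * (gf \<theta> \<bullet> Gbar t \<theta>) + \<gamma> * \<eta>\<^sup>2 * ((norm (Gbar t \<theta>))\<^sup>2 + \<sigma>\<^sup>2)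
   \<le> - (\<eta> / 2) * (1 - 4 * \<eta> * \<gamma>) * ((norm (gf \<theta>))\<^sup>2 - (norm (Bfn t \<theta>))\<^sup>2) + K t"
proof -
  define A where "A = Afn t \<theta>"
  define B where "B = Bfn t \<theta>"
  define Dl where "Dl = Afn t \<theta> - Gbar t \<theta>"
  have G: "Gbar t \<theta> = A - Dl" by (simp add: A_def Dl_def)
  have gfe: "gf \<theta> = A + B" using AB_sum by (simp add: A_def B_def)
  have ip: "gf \<theta> \<bullet> Gbar t \<theta> = (norm A)\<^sup>2 - A \<bullet> Dl"
    unfolding G gfe using B_orth_A[of t \<theta>] B_orth_D[of t \<theta>]
    by (simp add: A_def B_def Dl_def inner_add_left inner_add_right inner_diff_right inner_diff_left power2_norm_eq_inner inner_commute)
  have a: "(norm A)\<^sup>2 = (norm (gf \<theta>))\<^sup>2 - (norm (Bfn t \<theta>))\<^sup>2"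
    using AB_norm[of \<theta> t] by (simp add: A_def)
  have h0: "A \<bullet> Dl \<le> ((norm A)\<^sup>2 + (norm Dl)\<^sup>2) / 2" by (rule inner_le_half)
  have h1: "\<eta> * (A \<bullet> Dl) \<le> \<eta> * (((norm A)\<^sup>2 + (norm Dl)\<^sup>2) / 2)"
    using h0 eta_pos by (intro mult_left_mono) auto
  have g2: "(norm (Gbar t \<theta>))\<^sup>2 \<le> 2 * (norm A)\<^sup>2 + 2 * (norm Dl)\<^sup>2"
    using norm_add_sq_le[of A "- Dl"] by (simp add: G)
  have h2: "\<gamma> * \<eta>\<^sup>2 * (norm (Gbar t \<theta>))\<^sup>2 \<le> \<gamma> * \<eta>\<^sup>2 * (2 * (norm A)\<^sup>2 + 2 * (norm Dl)\<^sup>2)"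
    using g2 gamma_pos by (intro mult_left_mono) auto
  have dE: "(norm Dl)\<^sup>2 \<le> E2 t" using delta_bound by (simp add: Dl_def)
  have h3: "(\<eta> / 2 + 2 * \<gamma> * \<eta>\<^sup>2) * (norm Dl)\<^sup>2 \<le> (\<eta> / 2 + 2 * \<gamma> * \<eta>\<^sup>2) * E2 t"
    using dE eta_pos gamma_pos by (intro mult_left_mono) auto
  show ?thesis
    unfolding ip a[symmetric] K_def using h1 h2 h3
    by (simp add: algebra_simps power2_eq_square)
qed

lemma pt_bound:
  assumes xi: "\<forall>i\<in>S t. \<xi> i \<in> set_pmf (Q i)"
  shows "ff (\<theta> - \<eta> *\<^sub>R Gs t \<theta> \<xi>) \<le> ff \<theta> - \<eta> * (gf \<theta> \<bullet> Gs t \<theta> \<xi>) + \<gamma> * \<eta>\<^sup>2 * ((norm (Gbar t \<theta>))\<^sup>2 + \<sigma>\<^sup>2)"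
proof -
  have d: "ff (\<theta> - \<eta> *\<^sub>R Gs t \<theta> \<xi>) \<le> ff \<theta> - \<eta> * (gf \<theta> \<bullet> Gs t \<theta> \<xi>) + \<gamma> / 2 * \<eta>\<^sup>2 * (norm (Gs t \<theta> \<xi>))\<^sup>2"
    using f_descent[of "\<theta> - \<eta> *\<^sub>R Gs t \<theta> \<xi>" \<theta>] eta_pos
    by (simp add: power_mult_distrib)
  have "(norm (Gs t \<theta> \<xi>))\<^sup>2 \<le> 2 * (norm (Gbar t \<theta>))\<^sup>2 + 2 * (norm (Gs t \<theta> \<xi> - Gbar t \<theta>))\<^sup>2"
    using norm_add_sq_le[of "Gbar t \<theta>" "Gs t \<theta> \<xi> - Gbar t \<theta>"] by simp
  also have "\<dots> \<le> 2 * (norm (Gbar t \<theta>))\<^sup>2 + 2 * \<sigma>\<^sup>2"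
    using noise_bound[OF xi] by simp
  finally have "\<gamma> / 2 * \<eta>\<^sup>2 * (norm (Gs t \<theta> \<xi>))\<^sup>2 \<le> \<gamma> / 2 * \<eta>\<^sup>2 * (2 * (norm (Gbar t \<theta>))\<^sup>2 + 2 * \<sigma>\<^sup>2)"
    using gamma_pos by (intro mult_left_mono) auto
  with d show ?thesis by (simp add: algebra_simps)
qed

end


context flsetup begin

lemma Gs_norm_bound:
  assumes xi: "\<forall>i\<in>S t. \<xi> i \<in> set_pmf (Q i)"
  shows "norm (Gs t \<theta> \<xi>) \<le> norm (Gbar t \<theta>) + \<bar>\<sigma>\<bar>"
proof -
  have "norm (Gs t \<theta> \<xi> - Gbar t \<theta>) \<le> \<bar>\<sigma>\<bar>" using noise_bound[OF xi] by (rule sq_le_abs)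
  then show ?thesis using norm_triangle_sub[of "Gs t \<theta> \<xi>" "Gbar t \<theta>"] by linarith
qed

definition Mb :: "nat \<Rightarrow> real^'p \<Rightarrow> real" where
  "Mb t \<theta> = \<bar>ff \<theta>s\<bar> + \<bar>ff \<theta>\<bar> + \<eta> * norm (gf \<theta>) * (norm (Gbar t \<theta>) + \<bar>\<sigma>\<bar>)
     + \<gamma> * \<eta>\<^sup>2 * ((norm (Gbar t \<theta>))\<^sup>2 + \<sigma>\<^sup>2)"

lemma next_abs:
  assumes xi: "\<forall>i\<in>S t. \<xi> i \<in> set_pmf (Q i)"
  shows "\<bar>ff (\<theta> - \<eta> *\<^sub>R Gs t \<theta> \<xi>)\<bar> \<le> Mb t \<theta>"
proof -
  have "\<bar>gf \<theta> \<bullet> Gs t \<theta> \<xi>\<bar> \<le> norm (gf \<theta>) * norm (Gs t \<theta> \<xi>)" by (rule Cauchy_Schwarz_ineq2)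
  also have "\<dots> \<le> norm (gf \<theta>) * (norm (Gbar t \<theta>) + \<bar>\<sigma>\<bar>)"
    using Gs_norm_bound[OF xi] by (intro mult_left_mono) auto
  finally have c: "\<bar>gf \<theta> \<bullet> Gs t \<theta> \<xi>\<bar> \<le> norm (gf \<theta>) * (norm (Gbar t \<theta>) + \<bar>\<sigma>\<bar>)" .
  have "- (gf \<theta> \<bullet> Gs t \<theta> \<xi>) \<le> norm (gf \<theta>) * (norm (Gbar t \<theta>) + \<bar>\<sigma>\<bar>)"
    using c by linarith
  then have "\<eta> * (- (gf \<theta> \<bullet> Gs t \<theta> \<xi>)) \<le> \<eta> * (norm (gf \<theta>) * (norm (Gbar t \<theta>) + \<bar>\<sigma>\<bar>))"
    using eta_pos by (intro mult_left_mono) auto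
  then have c2: "- \<eta> * (gf \<theta> \<bullet> Gs t \<theta> \<xi>) \<le> \<eta> * norm (gf \<theta>) * (norm (Gbar t \<theta>) + \<bar>\<sigma>\<bar>)"
    by (simp add: mult.assoc)
  have lo: "ff \<theta>s \<le> ff (\<theta> - \<eta> *\<^sub>R Gs t \<theta> \<xi>)" using minimizer by blast
  have up: "ff (\<theta> - \<eta> *\<^sub>R Gs t \<theta> \<xi>) \<le> ff \<theta> - \<eta> * (gf \<theta> \<bullet> Gs t \<theta> \<xi>) + \<gamma> * \<eta>\<^sup>2 * ((norm (Gbar t \<theta>))\<^sup>2 + \<sigma>\<^sup>2)"
    by (rule pt_bound[OF xi])
  have nn: "0 \<le> \<gamma> * \<eta>\<^sup>2 * ((norm (Gbar t \<theta>))\<^sup>2 + \<sigma>\<^sup>2)" using gamma_pos by simp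
  have nn2: "0 \<le> \<eta> * norm (gf \<theta>) * (norm (Gbar t \<theta>) + \<bar>\<sigma>\<bar>)" using eta_pos by simp
  have a1: "ff \<theta> \<le> \<bar>ff \<theta>\<bar>" "- ff \<theta>s \<le> \<bar>ff \<theta>s\<bar>" "0 \<le> \<bar>ff \<theta>\<bar>" "0 \<le> \<bar>ff \<theta>s\<bar>" by auto
  show ?thesis unfolding Mb_def abs_le_iff using lo up c2 nn nn2 a1 by linarith
qed

lemma step_integrable: "integrable (measure_pmf (PQ t)) (\<lambda>\<xi>. ff (\<theta> - \<eta> *\<^sub>R Gs t \<theta> \<xi>))"
  using next_abs PQ_supp by (intro pmf_integrable_bdd[where B="Mb t \<theta>"]) auto

lemma step_lower: "measure_pmf.expectation (PQ t) (\<lambda>\<xi>. ff (\<theta> - \<eta> *\<^sub>R Gs t \<theta> \<xi>)) \<ge> ff \<theta>s"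
proof -
  have "measure_pmf.expectation (PQ t) (\<lambda>\<xi>. ff \<theta>s) \<le> measure_pmf.expectation (PQ t) (\<lambda>\<xi>. ff (\<theta> - \<eta> *\<^sub>R Gs t \<theta> \<xi>))"
    using minimizer by (intro integral_mono step_integrable) auto
  then show ?thesis by simp
qed

lemma step_exp:
  "measure_pmf.expectation (PQ t) (\<lambda>\<xi>. ff (\<theta> - \<eta> *\<^sub>R Gs t \<theta> \<xi>))
   \<le> ff \<theta> - (\<eta> / 2) * (1 - 4 * \<eta> * \<gamma>) * ((norm (gf \<theta>))\<^sup>2 - (norm (Bfn t \<theta>))\<^sup>2) + K t"
proof -
  define c where "c = \<gamma> * \<eta>\<^sup>2 * ((norm (Gbar t \<theta>))\<^sup>2 + \<sigma>\<^sup>2)"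
  have "measure_pmf.expectation (PQ t) (\<lambda>\<xi>. ff (\<theta> - \<eta> *\<^sub>R Gs t \<theta> \<xi>))
      \<le> measure_pmf.expectation (PQ t) (\<lambda>\<xi>. ff \<theta> - \<eta> * (gf \<theta> \<bullet> Gs t \<theta> \<xi>) + c)"
    using pt_bound PQ_supp unfolding c_def
    by (intro integral_mono_AE step_integrable)
       (auto simp: AE_measure_pmf_iff intro!: Bochner_Integration.integrable_add Bochner_Integration.integrable_diff Gs_inner_integrable)
  also have "\<dots> = ff \<theta> - \<eta> * (gf \<theta> \<bullet> Gbar t \<theta>) + c"
    using Gs_inner_integrable[of t "gf \<theta>" \<theta>]
    by (simp add: Bochner_Integration.integral_add Bochner_Integration.integral_diff exp_lin)
  also have "\<dots> \<le> ff \<theta> - (\<eta> / 2) * (1 - 4 * \<eta> * \<gamma>) * ((norm (gf \<theta>))\<^sup>2 - (norm (Bfn t \<theta>))\<^sup>2) + K t"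
    using det_bound[of \<theta> t] unfolding c_def by linarith
  finally show ?thesis .
qed

end


context flsetup begin

abbreviation "tr t \<equiv> traj N layer F D S Ls Q \<eta> \<theta>0 t"

lemma tr_Suc: "tr (Suc t) = bind_pmf (tr t) (\<lambda>\<theta>. map_pmf (\<lambda>\<xi>. \<theta> - \<eta> *\<^sub>R Gs t \<theta> \<xi>) (PQ t))"
  by (simp add: Gs_def)

lemma gf_bound: "norm (gf \<theta>) \<le> norm (gf \<theta>0) + \<gamma> * (norm \<theta> + norm \<theta>0)"
proof -
  have "norm (gf \<theta>) \<le> norm (gf \<theta>0) + norm (gf \<theta> - gf \<theta>0)" by (rule norm_triangle_sub)
  also have "norm (gf \<theta> - gf \<theta>0) \<le> \<gamma> * norm (\<theta> - \<theta>0)" by (rule gf_lip)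
  also have "\<gamma> * norm (\<theta> - \<theta>0) \<le> \<gamma> * (norm \<theta> + norm \<theta>0)"
    using gamma_pos norm_triangle_ineq4[of \<theta> \<theta>0] by (intro mult_left_mono) auto
  finally show ?thesis by simp
qed

lemma Gbar_bound: "norm (Gbar t \<theta>) \<le> norm (gf \<theta>) + sqrt (E2 t)"
proof -
  have "norm (Afn t \<theta> - Gbar t \<theta>) \<le> \<bar>sqrt (E2 t)\<bar>"
    using delta_bound[of t \<theta>] E2_nonneg[of t] by (intro sq_le_abs) simp
  then have d: "norm (Afn t \<theta> - Gbar t \<theta>) \<le> sqrt (E2 t)" using E2_nonneg[of t] by simp
  have "(norm (Afn t \<theta>))\<^sup>2 \<le> (norm (gf \<theta>))\<^sup>2" using AB_norm[of \<theta> t] by simp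
  then have a: "norm (Afn t \<theta>) \<le> norm (gf \<theta>)" using power2_le_imp_le by (metis norm_ge_zero)
  have "norm (Gbar t \<theta>) \<le> norm (Afn t \<theta>) + norm (Afn t \<theta> - Gbar t \<theta>)"
    using norm_triangle_sub[of "Gbar t \<theta>" "Afn t \<theta>"] by (simp add: norm_minus_commute)
  with a d show ?thesis by linarith
qed

lemma supp_bdd: "\<exists>R. \<forall>\<theta>\<in>set_pmf (tr t). norm \<theta> \<le> R"
proof (induction t)
  case 0
  then show ?case by auto
next
  case (Suc t)
  then obtain R where R: "\<forall>\<theta>\<in>set_pmf (tr t). norm \<theta> \<le> R" by blast
  define R' where "R' = R + \<eta> * (norm (gf \<theta>0) + \<gamma> * (R + norm \<theta>0) + sqrt (E2 t) + \<bar>\<sigma>\<bar>)"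
  have "norm \<theta>' \<le> R'" if th': "\<theta>' \<in> set_pmf (tr (Suc t))" for \<theta>'
  proof -
    obtain \<theta> \<xi> where th: "\<theta> \<in> set_pmf (tr t)" and xs: "\<xi> \<in> set_pmf (PQ t)"
      and eq: "\<theta>' = \<theta> - \<eta> *\<^sub>R Gs t \<theta> \<xi>"
      using th' unfolding tr_Suc by auto
    have n1: "norm \<theta>' \<le> norm \<theta> + \<eta> * norm (Gs t \<theta> \<xi>)"
      unfolding eq using norm_triangle_ineq4[of \<theta> "\<eta> *\<^sub>R Gs t \<theta> \<xi>"] eta_pos by simp
    have "norm (Gs t \<theta> \<xi>) \<le> norm (gf \<theta>0) + \<gamma> * (R + norm \<theta>0) + sqrt (E2 t) + \<bar>\<sigma>\<bar>"
    proof -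
      have "norm (Gs t \<theta> \<xi>) \<le> norm (Gbar t \<theta>) + \<bar>\<sigma>\<bar>" using Gs_norm_bound PQ_supp[OF xs] by blast
      moreover have "\<gamma> * (norm \<theta> + norm \<theta>0) \<le> \<gamma> * (R + norm \<theta>0)"
        using R th gamma_pos by (intro mult_left_mono) auto
      ultimately show ?thesis using Gbar_bound[of t \<theta>] gf_bound[of \<theta>] by linarith
    qed
    then have "\<eta> * norm (Gs t \<theta> \<xi>) \<le> \<eta> * (norm (gf \<theta>0) + \<gamma> * (R + norm \<theta>0) + sqrt (E2 t) + \<bar>\<sigma>\<bar>)"
      using eta_pos by (intro mult_left_mono) auto
    then show ?thesis using n1 R th unfolding R'_def by fastforce
  qed
  then show ?case by blast
qed

lemma bdd_integrable:
  fixes u :: "real^'p \<Rightarrow> real"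
  assumes "\<exists>B. \<forall>\<theta>\<in>set_pmf M. \<bar>u \<theta>\<bar> \<le> B"
  shows "integrable (measure_pmf M) u"
  using assms by (metis pmf_integrable_bdd real_norm_def)

lemma ff_supp_bdd: "\<exists>B. \<forall>\<theta>\<in>set_pmf (tr t). \<bar>ff \<theta>\<bar> \<le> B"
proof -
  obtain R where R: "\<forall>\<theta>\<in>set_pmf (tr t). norm \<theta> \<le> R" using supp_bdd by blast
  define B where "B = \<bar>ff \<theta>s\<bar> + \<bar>ff \<theta>0\<bar> + norm (gf \<theta>0) * (R + norm \<theta>0) + \<gamma> / 2 * (R + norm \<theta>0)\<^sup>2"
  have "\<bar>ff \<theta>\<bar> \<le> B" if th: "\<theta> \<in> set_pmf (tr t)" for \<theta>
  proof -
    have n: "norm (\<theta> - \<theta>0) \<le> R + norm \<theta>0" using R th norm_triangle_ineq4[of \<theta> \<theta>0] by fastforce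
    have up: "ff \<theta> \<le> ff \<theta>0 + gf \<theta>0 \<bullet> (\<theta> - \<theta>0) + \<gamma> / 2 * (norm (\<theta> - \<theta>0))\<^sup>2" by (rule f_descent)
    have i1: "gf \<theta>0 \<bullet> (\<theta> - \<theta>0) \<le> norm (gf \<theta>0) * (R + norm \<theta>0)"
      using Cauchy_Schwarz_ineq2[of "gf \<theta>0" "\<theta> - \<theta>0"] mult_left_mono[OF n, of "norm (gf \<theta>0)"] by auto
    have i2: "\<gamma> / 2 * (norm (\<theta> - \<theta>0))\<^sup>2 \<le> \<gamma> / 2 * (R + norm \<theta>0)\<^sup>2"
      using gamma_pos n by (intro mult_left_mono power_mono) auto
    have lo: "ff \<theta>s \<le> ff \<theta>" using minimizer by blast
    have a1: "ff \<theta>0 \<le> \<bar>ff \<theta>0\<bar>" "- ff \<theta>s \<le> \<bar>ff \<theta>s\<bar>" "0 \<le> \<bar>ff \<theta>0\<bar>" "0 \<le> \<bar>ff \<theta>s\<bar>" by auto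
    have "0 \<le> R + norm \<theta>0" using n norm_ge_zero order_trans by blast
    then have nn: "0 \<le> norm (gf \<theta>0) * (R + norm \<theta>0)" "0 \<le> \<gamma> / 2 * (R + norm \<theta>0)\<^sup>2"
      using gamma_pos by auto
    show ?thesis unfolding B_def abs_le_iff using up i1 i2 lo a1 nn by linarith
  qed
  then show ?thesis by blast
qed

lemma gf_supp_bdd: "\<exists>B. \<forall>\<theta>\<in>set_pmf (tr t). \<bar>(norm (gf \<theta>))\<^sup>2\<bar> \<le> B"
proof -
  obtain R where R: "\<forall>\<theta>\<in>set_pmf (tr t). norm \<theta> \<le> R" using supp_bdd by blast
  have "\<bar>(norm (gf \<theta>))\<^sup>2\<bar> \<le> (norm (gf \<theta>0) + \<gamma> * (R + norm \<theta>0))\<^sup>2" if th: "\<theta> \<in> set_pmf (tr t)" for \<theta>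
  proof -
    have "\<gamma> * (norm \<theta> + norm \<theta>0) \<le> \<gamma> * (R + norm \<theta>0)"
      using R th gamma_pos by (intro mult_left_mono) auto
    then have "norm (gf \<theta>) \<le> norm (gf \<theta>0) + \<gamma> * (R + norm \<theta>0)" using gf_bound[of \<theta>] by linarith
    then show ?thesis by (simp add: power_mono)
  qed
  then show ?thesis by blast
qed

lemma B_le_gf: "(norm (Bfn t \<theta>))\<^sup>2 \<le> (norm (gf \<theta>))\<^sup>2"
  using AB_norm[of \<theta> t] by simp

lemma B_supp_bdd: "\<exists>B. \<forall>\<theta>\<in>set_pmf (tr t'). \<bar>(norm (Bfn t \<theta>))\<^sup>2\<bar> \<le> B"
proof -
  obtain B where B: "\<forall>\<theta>\<in>set_pmf (tr t'). \<bar>(norm (gf \<theta>))\<^sup>2\<bar> \<le> B" using gf_supp_bdd by blast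
  have "\<bar>(norm (Bfn t \<theta>))\<^sup>2\<bar> \<le> B" if "\<theta> \<in> set_pmf (tr t')" for \<theta>
  proof -
    have "\<bar>(norm (gf \<theta>))\<^sup>2\<bar> \<le> B" using B that by blast
    then have "(norm (gf \<theta>))\<^sup>2 \<le> B" by simp
    moreover have "\<bar>(norm (Bfn t \<theta>))\<^sup>2\<bar> = (norm (Bfn t \<theta>))\<^sup>2" by (rule abs_power2)
    moreover note B_le_gf[of t \<theta>]
    ultimately show ?thesis by linarith
  qed
  then show ?thesis by blast
qed

end


context flsetup begin

abbreviation "hh t \<theta> \<equiv> measure_pmf.expectation (PQ t) (\<lambda>\<xi>. ff (\<theta> - \<eta> *\<^sub>R Gs t \<theta> \<xi>))"

lemma C_nonneg_part: "0 \<le> (\<eta> / 2) * (1 - 4 * \<eta> * \<gamma>) * ((norm (gf \<theta>))\<^sup>2 - (norm (Bfn t \<theta>))\<^sup>2)"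
  using eta_pos C_pos B_le_gf[of t \<theta>] by simp

lemma h_upper: "hh t \<theta> \<le> ff \<theta> + K t"
  using step_exp[of t \<theta>] C_nonneg_part[of \<theta> t] by linarith

lemma h_supp_bdd: "\<exists>B. \<forall>\<theta>\<in>set_pmf (tr t). \<bar>hh t \<theta>\<bar> \<le> B"
proof -
  obtain B where B: "\<forall>\<theta>\<in>set_pmf (tr t). \<bar>ff \<theta>\<bar> \<le> B" using ff_supp_bdd by blast
  have "\<bar>hh t \<theta>\<bar> \<le> \<bar>ff \<theta>s\<bar> + B + \<bar>K t\<bar>" if "\<theta> \<in> set_pmf (tr t)" for \<theta>
  proof -
    have "\<bar>ff \<theta>\<bar> \<le> B" using B that by blast
    moreover have "ff \<theta>s \<le> hh t \<theta>" by (rule step_lower)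
    moreover note h_upper[of t \<theta>]
    moreover have "- ff \<theta>s \<le> \<bar>ff \<theta>s\<bar>" "K t \<le> \<bar>K t\<bar>" "0 \<le> \<bar>ff \<theta>s\<bar>" "0 \<le> \<bar>K t\<bar>" by auto
    ultimately show ?thesis unfolding abs_le_iff by linarith
  qed
  then show ?thesis by blast
qed

definition "aa t = measure_pmf.expectation (tr t) ff"
definition "gg t = measure_pmf.expectation (tr t) (\<lambda>\<theta>. (norm (gf \<theta>))\<^sup>2)"
definition "bb t = measure_pmf.expectation (tr t) (\<lambda>\<theta>. (norm (Bfn t \<theta>))\<^sup>2)"

lemma rec: "aa (Suc t) \<le> aa t - (\<eta> / 2) * (1 - 4 * \<eta> * \<gamma>) * (gg t - bb t) + K t"
proof -
  obtain Bs where Bs: "\<forall>\<theta>\<in>set_pmf (tr (Suc t)). \<bar>ff \<theta>\<bar> \<le> Bs" using ff_supp_bdd by blast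
  have i1: "integrable (measure_pmf (tr t)) ff" using ff_supp_bdd by (rule bdd_integrable)
  have i2: "integrable (measure_pmf (tr t)) (\<lambda>\<theta>. (norm (gf \<theta>))\<^sup>2)" using gf_supp_bdd by (rule bdd_integrable)
  have i3: "integrable (measure_pmf (tr t)) (\<lambda>\<theta>. (norm (Bfn t \<theta>))\<^sup>2)" using B_supp_bdd by (rule bdd_integrable)
  have i4: "integrable (measure_pmf (tr t)) (hh t)" using h_supp_bdd by (rule bdd_integrable)
  have "aa (Suc t) = measure_pmf.expectation (tr t)
          (\<lambda>\<theta>. measure_pmf.expectation (map_pmf (\<lambda>\<xi>. \<theta> - \<eta> *\<^sub>R Gs t \<theta> \<xi>) (PQ t)) ff)"
    unfolding aa_def using Bs unfolding tr_Suc by (rule pmf_bind_integral)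
  also have "\<dots> = measure_pmf.expectation (tr t) (hh t)" by simp
  also have "\<dots> \<le> measure_pmf.expectation (tr t)
      (\<lambda>\<theta>. ff \<theta> - (\<eta> / 2) * (1 - 4 * \<eta> * \<gamma>) * ((norm (gf \<theta>))\<^sup>2 - (norm (Bfn t \<theta>))\<^sup>2) + K t)"
    using i1 i2 i3 i4 step_exp by (intro integral_mono) auto
  also have "\<dots> = aa t - (\<eta> / 2) * (1 - 4 * \<eta> * \<gamma>) * (gg t - bb t) + K t"
    using i1 i2 i3 unfolding aa_def gg_def bb_def
    by (simp add: Bochner_Integration.integral_add Bochner_Integration.integral_diff right_diff_distrib)
  finally show ?thesis .
qed

lemma aa0: "aa 0 = ff \<theta>0" by (simp add: aa_def)

lemma aa_lower: "aa t \<ge> ff \<theta>s"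
proof -
  have "measure_pmf.expectation (tr t) (\<lambda>\<theta>. ff \<theta>s) \<le> aa t"
    unfolding aa_def using minimizer ff_supp_bdd[of t] by (intro integral_mono bdd_integrable) auto
  then show ?thesis by simp
qed

lemma tele: "(\<eta> / 2) * (1 - 4 * \<eta> * \<gamma>) * (\<Sum>t<n. gg t - bb t) \<le> ff \<theta>0 - aa n + (\<Sum>t<n. K t)"
proof (induction n)
  case 0
  then show ?case by (simp add: aa0)
next
  case (Suc n)
  then show ?case using rec[of n] by (simp add: distrib_left)
qed

end


lemma Min_le_avg:
  fixes g :: "nat \<Rightarrow> real"
  assumes "T > 0"
  shows "Min (g ` {..<T}) \<le> (\<Sum>t<T. g t) / real T"
proof -
  have "\<forall>t<T. Min (g ` {..<T}) \<le> g t" by (auto intro: Min_le)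
  then have "(\<Sum>t<T. Min (g ` {..<T})) \<le> (\<Sum>t<T. g t)" by (intro sum_mono) auto
  then have "real T * Min (g ` {..<T}) \<le> (\<Sum>t<T. g t)" by simp
  then show ?thesis using assms by (simp add: field_simps)
qed

context flsetup begin

lemma bb_nonneg: "bb t \<ge> 0"
  unfolding bb_def by (intro Bochner_Integration.integral_nonneg) auto

lemma coef_ineq: "(1 + 4 * \<gamma> * \<eta>) / (1 - 4 * \<eta> * \<gamma>) \<le> 1 / (\<gamma> * \<eta> * (1 - 4 * \<eta> * \<gamma>)) + 2"
proof -
  define x where "x = \<gamma> * \<eta>"
  have x: "0 < x" "x < 1/4" using eta_pos gamma_pos C_pos by (auto simp: x_def algebra_simps)
  have Cp: "0 < 1 - 4 * x" using x by simp
  have "4 < 1 / x" using x by (simp add: field_simps)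
  moreover have "12 * x < 3" using x by linarith
  ultimately have "1 + 4 * x \<le> 1 / x + (2 - 8 * x)" by linarith
  then have "1 + 4 * x \<le> 1 / x + 2 * (1 - 4 * x)" by (simp add: algebra_simps)
  then have "(1 + 4 * x) / (1 - 4 * x) \<le> (1 / x + 2 * (1 - 4 * x)) / (1 - 4 * x)"
    using Cp by (intro divide_right_mono) auto
  also have "\<dots> = 1 / (x * (1 - 4 * x)) + 2" using Cp x by (simp add: field_simps)
  finally show ?thesis by (simp add: x_def algebra_simps)
qed

lemma coef1: "1 \<le> 1 / (\<gamma> * \<eta> * (1 - 4 * \<eta> * \<gamma>)) + 2"
  using eta_pos gamma_pos C_pos by simp

lemma K_div: "K t / ((\<eta> / 2) * (1 - 4 * \<eta> * \<gamma>))
   = (1 + 4 * \<gamma> * \<eta>) / (1 - 4 * \<eta> * \<gamma>) * E2 t + 2 * \<gamma> * \<eta> / (1 - 4 * \<eta> * \<gamma>) * \<sigma>\<^sup>2"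
proof -
  have gen: "\<And>C E. C \<noteq> 0 \<Longrightarrow> \<eta> \<noteq> 0 \<Longrightarrow> ((\<eta> / 2 + 2 * \<gamma> * \<eta>\<^sup>2) * E + \<gamma> * \<eta>\<^sup>2 * \<sigma>\<^sup>2) / ((\<eta> / 2) * C)
      = (1 + 4 * \<gamma> * \<eta>) / C * E + 2 * \<gamma> * \<eta> / C * \<sigma>\<^sup>2"
    by (simp add: field_simps power2_eq_square)
  have "1 - 4 * \<eta> * \<gamma> \<noteq> 0" "\<eta> \<noteq> 0" using eta_pos C_pos by auto
  then show ?thesis unfolding K_def by (rule gen)
qed

lemma term_bound: "bb t + K t / ((\<eta> / 2) * (1 - 4 * \<eta> * \<gamma>))
   \<le> (1 / (\<gamma> * \<eta> * (1 - 4 * \<eta> * \<gamma>)) + 2) * (bb t + E2 t) + 2 * \<gamma> * \<eta> / (1 - 4 * \<eta> * \<gamma>) * \<sigma>\<^sup>2"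
proof -
  define k where "k = 1 / (\<gamma> * \<eta> * (1 - 4 * \<eta> * \<gamma>)) + 2"
  have "bb t \<le> k * bb t" using coef1 bb_nonneg[of t] unfolding k_def
    by (metis mult_le_cancel_right1 mult.commute order.strict_iff_not)
  moreover have "(1 + 4 * \<gamma> * \<eta>) / (1 - 4 * \<eta> * \<gamma>) * E2 t \<le> k * E2 t"
    using coef_ineq E2_nonneg[of t] unfolding k_def by (intro mult_right_mono) auto
  ultimately show ?thesis unfolding K_div k_def[symmetric] by (simp add: distrib_left)
qed

lemma main_aux:
  assumes T_pos: "T > 0"
  shows "Min (gg ` {..<T})
    \<le> 2 / (\<eta> * (1 - 4 * \<eta> * \<gamma>) * real T) * (ff \<theta>0 - ff \<theta>s)
      + 2 * \<gamma> * \<eta> / (1 - 4 * \<eta> * \<gamma>) * \<sigma>\<^sup>2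
      + (1 / real T) * (\<Sum>t<T. (1 / (\<gamma> * \<eta> * (1 - 4 * \<eta> * \<gamma>)) + 2) * (bb t + E2 t))"
proof -
  define c where "c = (\<eta> / 2) * (1 - 4 * \<eta> * \<gamma>)"
  define k where "k = 1 / (\<gamma> * \<eta> * (1 - 4 * \<eta> * \<gamma>)) + 2"
  define s2 where "s2 = 2 * \<gamma> * \<eta> / (1 - 4 * \<eta> * \<gamma>) * \<sigma>\<^sup>2"
  have cp: "c > 0" using eta_pos C_pos by (simp add: c_def)
  have "c * (\<Sum>t<T. gg t - bb t) \<le> ff \<theta>0 - ff \<theta>s + (\<Sum>t<T. K t)"
    using tele[of T] aa_lower[of T] unfolding c_def by linarith
  then have "(\<Sum>t<T. gg t - bb t) \<le> (ff \<theta>0 - ff \<theta>s + (\<Sum>t<T. K t)) / c"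
    using cp by (simp add: pos_le_divide_eq mult.commute)
  also have "\<dots> = (ff \<theta>0 - ff \<theta>s) / c + (\<Sum>t<T. K t / c)"
    by (simp add: add_divide_distrib sum_divide_distrib)
  finally have "(\<Sum>t<T. gg t) \<le> (ff \<theta>0 - ff \<theta>s) / c + (\<Sum>t<T. bb t + K t / c)"
    by (simp add: sum_subtractf sum.distrib)
  also have "(\<Sum>t<T. bb t + K t / c) \<le> (\<Sum>t<T. k * (bb t + E2 t) + s2)"
    unfolding c_def k_def s2_def by (intro sum_mono term_bound)
  also have "\<dots> = (\<Sum>t<T. k * (bb t + E2 t)) + real T * s2"
    by (simp add: sum.distrib)
  finally have sg: "(\<Sum>t<T. gg t) \<le> (ff \<theta>0 - ff \<theta>s) / c + (\<Sum>t<T. k * (bb t + E2 t)) + real T * s2"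
    by simp
  have "Min (gg ` {..<T}) \<le> (\<Sum>t<T. gg t) / real T" by (rule Min_le_avg[OF T_pos])
  also have "\<dots> \<le> ((ff \<theta>0 - ff \<theta>s) / c + (\<Sum>t<T. k * (bb t + E2 t)) + real T * s2) / real T"
    using sg T_pos by (intro divide_right_mono) auto
  also have "\<dots> = 2 / (\<eta> * (1 - 4 * \<eta> * \<gamma>) * real T) * (ff \<theta>0 - ff \<theta>s) + s2
      + (1 / real T) * (\<Sum>t<T. k * (bb t + E2 t))"
    using T_pos eta_pos C_pos unfolding c_def by (simp add: field_simps)
  finally show ?thesis unfolding k_def s2_def .
qed

lemma main:
  assumes T_pos: "T > 0"
  shows "Min ((\<lambda>t. measure_pmf.expectation (traj N layer F D S Ls Q \<eta> \<theta>0 t)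
                    (\<lambda>\<theta>. (norm (grad (fglob N F D) \<theta>))\<^sup>2)) ` {..<T})
    \<le> 2 / (\<eta> * (1 - 4 * \<eta> * \<gamma>) * real T) * (fglob N F D \<theta>0 - fglob N F D \<theta>s)
      + 2 * \<gamma> * \<eta> / (1 - 4 * \<eta> * \<gamma>) * \<sigma>\<^sup>2
      + (1 / real T) * (\<Sum>t<T. (1 / (\<gamma> * \<eta> * (1 - 4 * \<eta> * \<gamma>)) + 2) *
          (measure_pmf.expectation (traj N layer F D S Ls Q \<eta> \<theta>0 t)
             (\<lambda>\<theta>. (norm (\<Sum>l\<in>{1..L} - Lsel S Ls t. lblock layer l (grad (fglob N F D) \<theta>)))\<^sup>2)
           + (\<Sum>l\<in>Lsel S Ls t. chi2 N D S Ls t l * (\<kappa> l)\<^sup>2)))"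
  using main_aux[OF T_pos] unfolding gg_def[abs_def] bb_def Bfn_def E2_def .

end


theorem theorem1:
  fixes N L T :: nat
    and layer :: "'p::finite \<Rightarrow> nat"
    and F :: "nat \<Rightarrow> 'b \<Rightarrow> real^'p \<Rightarrow> real"
    and D :: "nat \<Rightarrow> 'b set"
    and Q :: "nat \<Rightarrow> 'b pmf"
    and S :: "nat \<Rightarrow> nat set"
    and Ls :: "nat \<Rightarrow> nat \<Rightarrow> nat set"
    and \<eta> \<gamma> \<sigma> :: real
    and \<sigma>l \<kappa> :: "nat \<Rightarrow> real"
    and \<theta>0 \<theta>s :: "real^'p"
  assumes N_pos: "N > 0"
    and layer_range: "\<forall>j. layer j \<in> {1..L}"
    and layer_nonempty: "\<forall>l\<in>{1..L}. \<exists>j. layer j = l"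
    and data: "\<forall>i\<in>{1..N}. finite (D i) \<and> D i \<noteq> {}"
    and S_sub: "\<forall>t. S t \<subseteq> {1..N}"
    and Ls_sub: "\<forall>t. \<forall>i\<in>S t. Ls t i \<subseteq> {1..L}"
    and diff: "\<forall>i\<in>{1..N}. \<forall>\<xi>\<in>D i \<union> set_pmf (Q i). \<forall>\<theta>. F i \<xi> differentiable (at \<theta>)"
    and minimizer: "\<forall>\<theta>. fglob N F D \<theta>s \<le> fglob N F D \<theta>"
    and eta_pos: "\<eta> > 0"
    and T_pos: "T > 0"
    and gamma_pos: "\<gamma> > 0"
    and smooth: "\<forall>i\<in>{1..N}. \<forall>\<theta> \<theta>'.
        norm (grad (fobj F D i) \<theta> - grad (fobj F D i) \<theta>') \<le> \<gamma> * norm (\<theta> - \<theta>')"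
    and unbiased: "\<forall>i\<in>{1..N}. \<forall>l\<in>{1..L}. \<forall>\<theta>.
        measure_pmf.expectation (Q i) (\<lambda>\<xi>. sgrad layer F i l \<theta> \<xi>)
          = lblock layer l (grad (fobj F D i) \<theta>)"
    and sigma_pos: "\<forall>l\<in>{1..L}. \<sigma>l l > 0"
    and bounded_var: "\<forall>i\<in>{1..N}. \<forall>l\<in>{1..L}. \<forall>\<theta>. \<forall>\<xi>\<in>set_pmf (Q i).
        (norm (sgrad layer F i l \<theta> \<xi> - lblock layer l (grad (fobj F D i) \<theta>)))\<^sup>2 \<le> (\<sigma>l l)\<^sup>2"
    and sigma_sum: "\<forall>t. (\<Sum>l\<in>Lsel S Ls t. (\<sigma>l l)\<^sup>2) \<le> \<sigma>\<^sup>2"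
    and kappa_pos: "\<forall>l\<in>{1..L}. \<kappa> l > 0"
    and diversity: "\<forall>i\<in>{1..N}. \<forall>l\<in>{1..L}. \<forall>\<theta>.
        (norm (lblock layer l (grad (fglob N F D) \<theta>) - lblock layer l (grad (fobj F D i) \<theta>)))\<^sup>2
          \<le> (\<kappa> l)\<^sup>2"
    and C_pos: "1 - 4 * \<eta> * \<gamma> > 0"
  shows "Min ((\<lambda>t. measure_pmf.expectation (traj N layer F D S Ls Q \<eta> \<theta>0 t)
                    (\<lambda>\<theta>. (norm (grad (fglob N F D) \<theta>))\<^sup>2)) ` {..<T})
    \<le> 2 / (\<eta> * (1 - 4 * \<eta> * \<gamma>) * real T) * (fglob N F D \<theta>0 - fglob N F D \<theta>s)
      + 2 * \<gamma> * \<eta> / (1 - 4 * \<eta> * \<gamma>) * \<sigma>\<^sup>2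
      + (1 / real T) * (\<Sum>t<T. (1 / (\<gamma> * \<eta> * (1 - 4 * \<eta> * \<gamma>)) + 2) *
          (measure_pmf.expectation (traj N layer F D S Ls Q \<eta> \<theta>0 t)
             (\<lambda>\<theta>. (norm (\<Sum>l\<in>{1..L} - Lsel S Ls t. lblock layer l (grad (fglob N F D) \<theta>)))\<^sup>2)
           + (\<Sum>l\<in>Lsel S Ls t. chi2 N D S Ls t l * (\<kappa> l)\<^sup>2)))"
proof -
  have loc: "flsetup N L layer F D Q S Ls \<eta> \<gamma> \<sigma> \<sigma>l \<kappa> \<theta>s"
    by (rule flsetup.intro[OF N_pos layer_range data S_sub Ls_sub diff minimizer eta_pos gamma_pos
          smooth unbiased bounded_var sigma_sum diversity C_pos])
  show ?thesis by (rule flsetup.main[OF loc T_pos])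
qed

end
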